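(* Let $S: x=x(u,v)$, $(u,v)\in\mathcal D$, be a strongly regular Weingarten surface parameterized by principal parameters. Then $(u,v)$ are geometric principal parameters if and only if $\sqrt{EG}\,(\nu_1-\nu_2)$ is constant.
   Context: For a surface $x=x(u,v)$ without umbilical points parameterized by principal parameters ($F=M=0$, with $E,F,G$, $L,M,N$ the coefficients of the first and second fundamental forms): $\nu_1=L/E$, $\nu_2=N/G$, $\gamma_1=-\frac{E_v}{2E\sqrt G}$, $\gamma_2=\frac{G_u}{2G\sqrt E}$. The surface is strongly regular if $(\nu_1-\nu_2)\gamma_1\gamma_2\neq0$, with the convention $\nu_1-\nu_2>0$. A strongly regular surface is Weingarten if there exist differentiable $f(\nu),g(\nu)$, $\nu\in\mathcal I\subseteq\mathbb R$, with $f-g>0$, $f'g'\neq0$, and a differentiable $\nu(u,v)\in\mathcal I$ with $\nu_u\nu_v\neq0$, such that $\nu_1=f(\nu)$, $\nu_2=g(\nu)$. With $\Phi$ an antiderivative of $f'/(f-g)$ and $\Psi$ an antiderivative of $g'/(g-f)$, put $\lambda=\ln\sqrt E+\Phi(\nu)$ and $\mu=\ln\sqrt G+\Psi(\nu)$. Principal parameters are geometric principal parameters if $\lambda$ and $\mu$ are constants. *)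

theory Defs
  imports "HOL-Analysis.Analysis"
begin

definition pu :: "(real \<times> real \<Rightarrow> 'a::real_normed_vector) \<Rightarrow> real \<times> real \<Rightarrow> 'a" where
  "pu f p = vector_derivative (\<lambda>s. f (s, snd p)) (at (fst p))"

definition pv :: "(real \<times> real \<Rightarrow> 'a::real_normed_vector) \<Rightarrow> real \<times> real \<Rightarrow> 'a" where
  "pv f p = vector_derivative (\<lambda>t. f (fst p, t)) (at (snd p))"

fun Ck :: "nat \<Rightarrow> (real \<times> real) set \<Rightarrow> (real \<times> real \<Rightarrow> 'a::real_normed_vector) \<Rightarrow> bool" where
  "Ck 0 D f = continuous_on D f"
| "Ck (Suc k) D f =
     (continuous_on D f \<and>
      (\<forall>p\<in>D. (\<lambda>s. f (s, snd p)) differentiable (at (fst p))) \<and>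
      (\<forall>p\<in>D. (\<lambda>t. f (fst p, t)) differentiable (at (snd p))) \<and>
      Ck k D (pu f) \<and> Ck k D (pv f))"

definition smooth_on_dom :: "(real \<times> real) set \<Rightarrow> (real \<times> real \<Rightarrow> 'a::real_normed_vector) \<Rightarrow> bool" where
  "smooth_on_dom D f \<longleftrightarrow> (\<forall>k. Ck k D f)"

type_synonym surf = "real \<times> real \<Rightarrow> real^3"

definition xu :: "surf \<Rightarrow> real \<times> real \<Rightarrow> real^3" where "xu x = pu x"
definition xv :: "surf \<Rightarrow> real \<times> real \<Rightarrow> real^3" where "xv x = pv x"

definition EE :: "surf \<Rightarrow> real \<times> real \<Rightarrow> real" where "EE x p = xu x p \<bullet> xu x p"
definition FF :: "surf \<Rightarrow> real \<times> real \<Rightarrow> real" where "FF x p = xu x p \<bullet> xv x p"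
definition GG :: "surf \<Rightarrow> real \<times> real \<Rightarrow> real" where "GG x p = xv x p \<bullet> xv x p"

definition unit_normal :: "surf \<Rightarrow> real \<times> real \<Rightarrow> real^3" where
  "unit_normal x p = scaleR (1 / norm (cross3 (xu x p) (xv x p))) (cross3 (xu x p) (xv x p))"
definition LL :: "surf \<Rightarrow> real \<times> real \<Rightarrow> real" where "LL x p = pu (xu x) p \<bullet> unit_normal x p"
definition MM :: "surf \<Rightarrow> real \<times> real \<Rightarrow> real" where "MM x p = pv (xu x) p \<bullet> unit_normal x p"
definition NN :: "surf \<Rightarrow> real \<times> real \<Rightarrow> real" where "NN x p = pv (xv x) p \<bullet> unit_normal x p"

definition regular_surface :: "(real \<times> real) set \<Rightarrow> surf \<Rightarrow> bool" where
  "regular_surface D x \<longleftrightarrow> open D \<and> connected D \<and> D \<noteq> {} \<and> smooth_on_dom D x \<and>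
     (\<forall>p\<in>D. cross3 (xu x p) (xv x p) \<noteq> 0)"

definition principal_params :: "(real \<times> real) set \<Rightarrow> surf \<Rightarrow> bool" where
  "principal_params D x \<longleftrightarrow> (\<forall>p\<in>D. FF x p = 0 \<and> MM x p = 0)"

definition nu1 :: "surf \<Rightarrow> real \<times> real \<Rightarrow> real" where "nu1 x p = LL x p / EE x p"
definition nu2 :: "surf \<Rightarrow> real \<times> real \<Rightarrow> real" where "nu2 x p = NN x p / GG x p"
definition gamma1 :: "surf \<Rightarrow> real \<times> real \<Rightarrow> real" where
  "gamma1 x p = - pv (EE x) p / (2 * EE x p * sqrt (GG x p))"
definition gamma2 :: "surf \<Rightarrow> real \<times> real \<Rightarrow> real" where
  "gamma2 x p = pu (GG x) p / (2 * GG x p * sqrt (EE x p))"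

text \<open>Strongly regular, with the convention nu1 - nu2 > 0 (hence no umbilical points).\<close>
definition strongly_regular :: "(real \<times> real) set \<Rightarrow> surf \<Rightarrow> bool" where
  "strongly_regular D x \<longleftrightarrow>
     (\<forall>p\<in>D. (nu1 x p - nu2 x p) * gamma1 x p * gamma2 x p \<noteq> 0 \<and> nu1 x p - nu2 x p > 0)"

definition weingarten_data ::
  "(real \<times> real) set \<Rightarrow> surf \<Rightarrow> real set \<Rightarrow> (real \<Rightarrow> real) \<Rightarrow> (real \<Rightarrow> real) \<Rightarrow> (real \<times> real \<Rightarrow> real) \<Rightarrow> bool" where
  "weingarten_data D x I f g \<nu> \<longleftrightarrow>
     open I \<and> is_interval I \<and>
     (\<forall>t\<in>I. f differentiable (at t) \<and> g differentiable (at t) \<and>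
             f t - g t > 0 \<and> deriv f t * deriv g t \<noteq> 0) \<and>
     (\<forall>p\<in>D. \<nu> p \<in> I \<and> \<nu> differentiable (at p) \<and> pu \<nu> p * pv \<nu> p \<noteq> 0 \<and>
             nu1 x p = f (\<nu> p) \<and> nu2 x p = g (\<nu> p))"

definition geometric_principal_params ::
  "(real \<times> real) set \<Rightarrow> surf \<Rightarrow> (real \<times> real \<Rightarrow> real) \<Rightarrow> (real \<Rightarrow> real) \<Rightarrow> (real \<Rightarrow> real) \<Rightarrow> bool" where
  "geometric_principal_params D x \<nu> \<Phi> \<Psi> \<longleftrightarrow>
     (\<exists>c. \<forall>p\<in>D. ln (sqrt (EE x p)) + \<Phi> (\<nu> p) = c) \<and>
     (\<exists>c. \<forall>p\<in>D. ln (sqrt (GG x p)) + \<Psi> (\<nu> p) = c)"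

end

theory Submission
  imports Defs
begin


lemma line_open_u: "open (D::(real\<times>real) set) \<Longrightarrow> open {s. (s, b) \<in> D}"
proof -
  assume "open D"
  have "continuous_on UNIV (\<lambda>s::real. (s, b))" by (intro continuous_intros)
  then have "open ((\<lambda>s::real. (s, b)) -` D \<inter> UNIV)"
    using continuous_on_open_vimage[OF open_UNIV] \<open>open D\<close> by blast
  then show ?thesis by (simp add: vimage_def)
qed

lemma line_open_v: "open (D::(real\<times>real) set) \<Longrightarrow> open {t. (a, t) \<in> D}"
proof -
  assume "open D"
  have "continuous_on UNIV (\<lambda>t::real. (a, t))" by (intro continuous_intros)
  then have "open ((\<lambda>t::real. (a, t)) -` D \<inter> UNIV)"
    using continuous_on_open_vimage[OF open_UNIV] \<open>open D\<close> by blast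
  then show ?thesis by (simp add: vimage_def)
qed

lemma deriv_eq_u:
  fixes g1 g2 :: "real \<times> real \<Rightarrow> 'a::real_normed_vector"
  assumes "open D" "p \<in> D" "\<And>q. q \<in> D \<Longrightarrow> g1 q = g2 q"
    "((\<lambda>s. g1 (s, snd p)) has_vector_derivative d1) (at (fst p))"
    "((\<lambda>s. g2 (s, snd p)) has_vector_derivative d2) (at (fst p))"
  shows "d1 = d2"
proof -
  have "((\<lambda>s. g2 (s, snd p)) has_vector_derivative d1) (at (fst p))"
    apply (rule has_vector_derivative_transform_within_open[OF assms(4) line_open_u[OF assms(1)]])
    using assms(2,3) by auto
  then show ?thesis using assms(5) vector_derivative_unique_at by blast
qed

lemma deriv_eq_v:
  fixes g1 g2 :: "real \<times> real \<Rightarrow> 'a::real_normed_vector"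
  assumes "open D" "p \<in> D" "\<And>q. q \<in> D \<Longrightarrow> g1 q = g2 q"
    "((\<lambda>t. g1 (fst p, t)) has_vector_derivative d1) (at (snd p))"
    "((\<lambda>t. g2 (fst p, t)) has_vector_derivative d2) (at (snd p))"
  shows "d1 = d2"
proof -
  have "((\<lambda>t. g2 (fst p, t)) has_vector_derivative d1) (at (snd p))"
    apply (rule has_vector_derivative_transform_within_open[OF assms(4) line_open_v[OF assms(1)]])
    using assms(2,3) by auto
  then show ?thesis using assms(5) vector_derivative_unique_at by blast
qed

lemma smooth_Ck: "smooth_on_dom D f \<Longrightarrow> Ck k D f" by (simp add: smooth_on_dom_def)

lemma smooth_pu: "smooth_on_dom D f \<Longrightarrow> smooth_on_dom D (pu f)"
  unfolding smooth_on_dom_def by (metis Ck.simps(2))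
lemma smooth_pv: "smooth_on_dom D f \<Longrightarrow> smooth_on_dom D (pv f)"
  unfolding smooth_on_dom_def by (metis Ck.simps(2))
lemma smooth_cont: "smooth_on_dom D f \<Longrightarrow> continuous_on D f"
  unfolding smooth_on_dom_def by (metis Ck.simps(1))

lemma smooth_hu: assumes "smooth_on_dom D f" "p \<in> D"
  shows "((\<lambda>s. f (s, snd p)) has_vector_derivative pu f p) (at (fst p))"
proof -
  have "Ck (Suc 0) D f" using assms by (simp add: smooth_on_dom_def)
  then have "(\<lambda>s. f (s, snd p)) differentiable (at (fst p))" using assms(2) by simp
  then show ?thesis unfolding pu_def by (simp add: vector_derivative_works)
qed

lemma smooth_hv: assumes "smooth_on_dom D f" "p \<in> D"
  shows "((\<lambda>t. f (fst p, t)) has_vector_derivative pv f p) (at (snd p))"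
proof -
  have "Ck (Suc 0) D f" using assms by (simp add: smooth_on_dom_def)
  then have "(\<lambda>t. f (fst p, t)) differentiable (at (snd p))" using assms(2) by simp
  then show ?thesis unfolding pv_def by (simp add: vector_derivative_works)
qed

lemma cross_triple: "cross3 (cross3 a b) c = (a \<bullet> c) *\<^sub>R b - (b \<bullet> c) *\<^sub>R a"
  by (simp add: cross3_simps forall_3)



lemma box_dist:
  fixes a b s t :: real
  assumes "\<bar>s - a\<bar> \<le> \<bar>h\<bar>" "\<bar>t - b\<bar> \<le> \<bar>k\<bar>" "\<bar>h\<bar> < d" "\<bar>k\<bar> < d"
  shows "dist (s, t) (a, b) < 2 * d"
proof -
  have "dist (s,t) (a,b) = sqrt ((dist s a)\<^sup>2 + (dist t b)\<^sup>2)" by (rule dist_Pair_Pair)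
  also have "\<dots> \<le> \<bar>dist s a\<bar> + \<bar>dist t b\<bar>" by (rule sqrt_sum_squares_le_sum_abs)
  also have "\<dots> < 2 * d" using assms by (simp add: dist_real_def)
  finally show ?thesis .
qed

lemma seg_bound: "(t::real) \<in> closed_segment b (b + k) \<Longrightarrow> \<bar>t - b\<bar> \<le> \<bar>k\<bar>"
  by (auto simp: closed_segment_eq_real_ivl split: if_splits)

lemma schwarz_half:
  fixes f :: "real \<times> real \<Rightarrow> 'a::real_normed_vector"
  assumes D: "open D" "(a,b) \<in> D"
   and hu: "\<And>q. q\<in>D \<Longrightarrow> ((\<lambda>s. f (s, snd q)) has_vector_derivative pu f q) (at (fst q))"
   and huv: "\<And>q. q\<in>D \<Longrightarrow> ((\<lambda>t. pu f (fst q, t)) has_vector_derivative pv (pu f) q) (at (snd q))"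
   and cont: "continuous_on D (pv (pu f))"
   and e: "e > 0"
  shows "\<exists>d>0. \<forall>h k. \<bar>h\<bar> < d \<longrightarrow> \<bar>k\<bar> < d \<longrightarrow>
     norm (f(a+h,b+k) - f(a+h,b) - f(a,b+k) + f(a,b) - (h*k) *\<^sub>R pv (pu f) (a,b)) \<le> 9*\<bar>h\<bar>*\<bar>k\<bar>*e"
proof -
  define c where "c = pv (pu f) (a,b)"
  obtain r where r: "r > 0" "ball (a,b) r \<subseteq> D" using D openE by blast
  have "isCont (pv (pu f)) (a,b)" using cont D continuous_on_eq_continuous_at by blast
  then obtain r2 where r2: "r2 > 0" "\<And>q. dist q (a,b) < r2 \<Longrightarrow> dist (pv (pu f) q) c < e"
    unfolding continuous_at_eps_delta c_def using e by blast
  define d where "d = min r r2 / 2"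
  have d: "d > 0" using r r2 by (simp add: d_def)
  have inbox: "(s,t) \<in> D \<and> norm (pv (pu f) (s,t) - c) < e"
    if "\<bar>s - a\<bar> \<le> \<bar>h\<bar>" "\<bar>t - b\<bar> \<le> \<bar>k\<bar>" "\<bar>h\<bar> < d" "\<bar>k\<bar> < d" for s t h k
  proof -
    have "dist (s,t) (a,b) < 2*d" using box_dist[OF that] .
    then have "dist (s,t) (a,b) < r" "dist (s,t) (a,b) < r2" unfolding d_def by auto
    then have "(s,t) \<in> ball (a,b) r" by (simp add: dist_commute)
    moreover have "norm (pv (pu f) (s,t) - c) < e" using r2(2)[OF \<open>dist (s,t) (a,b) < r2\<close>] by (simp add: dist_norm)
    moreover have "(s,t) \<in> D" using r(2) \<open>(s,t) \<in> ball (a,b) r\<close> by (rule subsetD)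
    ultimately show ?thesis by simp
  qed
  show ?thesis
  proof (intro exI[of _ d] conjI allI impI d)
    fix h k :: real assume hk: "\<bar>h\<bar> < d" "\<bar>k\<bar> < d"
    have step1: "norm (pu f (s,b+k) - pu f (s,b) - k *\<^sub>R c) \<le> 3*\<bar>k\<bar>*e"
      if s: "\<bar>s - a\<bar> \<le> \<bar>h\<bar>" for s
    proof -
      have in1: "(s,t) \<in> D \<and> norm (pv (pu f) (s,t) - c) < e" if "t \<in> closed_segment b (b+k)" for t
        using inbox[OF s seg_bound[OF that] hk] .
      have "norm ((\<lambda>t. pu f (s,t)) (b+k) - (\<lambda>t. pu f (s,t)) b - ((b+k) - b) *\<^sub>R pv (pu f) (s,b))
             \<le> norm ((b+k) - b) * (2*e)"
      proof (rule vector_differentiable_bound_linearization[where S="closed_segment b (b+k)"])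
        fix t assume t: "t \<in> closed_segment b (b+k)"
        show "((\<lambda>t. pu f (s, t)) has_vector_derivative pv (pu f) (s,t)) (at t within closed_segment b (b + k))"
          using huv[of "(s,t)"] in1[OF t] by (auto intro: has_vector_derivative_at_within)
        have "norm (pv (pu f) (s,t) - pv (pu f) (s,b)) \<le> norm (pv (pu f) (s,t) - c) + norm (pv (pu f) (s,b) - c)"
          using norm_triangle_ineq4[of "pv (pu f) (s,t) - c" "pv (pu f) (s,b) - c"] by simp
        also have "\<dots> \<le> 2*e" using in1[OF t] in1[of b] by auto
        finally show "norm (pv (pu f) (s,t) - pv (pu f) (s,b)) \<le> 2*e" .
      qed auto
      then have A: "norm (pu f (s,b+k) - pu f (s,b) - k *\<^sub>R pv (pu f) (s,b)) \<le> \<bar>k\<bar>*(2*e)" by simp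
      have B: "norm (k *\<^sub>R pv (pu f) (s,b) - k *\<^sub>R c) \<le> \<bar>k\<bar>*e"
      proof -
        have "norm (k *\<^sub>R pv (pu f) (s,b) - k *\<^sub>R c) = \<bar>k\<bar> * norm (pv (pu f) (s,b) - c)"
          by (metis norm_scaleR scaleR_diff_right)
        also have "\<dots> \<le> \<bar>k\<bar>*e" using in1[of b] by (auto intro: mult_left_mono)
        finally show ?thesis .
      qed
      have "norm (pu f (s,b+k) - pu f (s,b) - k *\<^sub>R c) \<le>
            norm (pu f (s,b+k) - pu f (s,b) - k *\<^sub>R pv (pu f) (s,b)) + norm (k *\<^sub>R pv (pu f) (s,b) - k *\<^sub>R c)"
        by (rule order_trans[OF _ norm_triangle_ineq]) (simp add: algebra_simps)
      then show ?thesis using A B by simp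
    qed
    define \<phi> where "\<phi> s = f (s, b+k) - f (s,b) - (s*k) *\<^sub>R c" for s
    define \<phi>' where "\<phi>' s = pu f (s, b+k) - pu f (s,b) - k *\<^sub>R c" for s
    have in2: "\<bar>s - a\<bar> \<le> \<bar>h\<bar>" if "s \<in> closed_segment a (a+h)" for s using seg_bound[OF that] .
    have "norm (\<phi> (a+h) - \<phi> a - ((a+h) - a) *\<^sub>R \<phi>' a) \<le> norm ((a+h) - a) * (6*\<bar>k\<bar>*e)"
    proof (rule vector_differentiable_bound_linearization[where S="closed_segment a (a+h)"])
      fix s assume s: "s \<in> closed_segment a (a+h)"
      have D1: "(s, b+k) \<in> D" "(s,b) \<in> D" using inbox[OF in2[OF s] _ hk] by auto
      have "((\<lambda>s. f (s, b+k) - f (s,b) - (s*k) *\<^sub>R c) has_vector_derivative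
              (pu f (s, b+k) - pu f (s,b) - (1*k) *\<^sub>R c)) (at s)"
        using hu[OF D1(1)] hu[OF D1(2)]
        by (auto intro!: derivative_eq_intros)
      then show "(\<phi> has_vector_derivative \<phi>' s) (at s within closed_segment a (a + h))"
        unfolding \<phi>_def[abs_def] \<phi>'_def by (auto intro: has_vector_derivative_at_within)
      have "norm (\<phi>' s - \<phi>' a) \<le> norm (\<phi>' s) + norm (\<phi>' a)" by (rule norm_triangle_ineq4)
      also have "\<dots> \<le> 3*\<bar>k\<bar>*e + 3*\<bar>k\<bar>*e" unfolding \<phi>'_def
        using step1[OF in2[OF s]] step1[of a] by (intro add_mono) auto
      finally show "norm (\<phi>' s - \<phi>' a) \<le> 6*\<bar>k\<bar>*e" by (simp add: algebra_simps)
    qed auto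
    then have A: "norm (\<phi> (a+h) - \<phi> a - h *\<^sub>R \<phi>' a) \<le> \<bar>h\<bar> * (6*\<bar>k\<bar>*e)" by simp
    have B: "norm (h *\<^sub>R \<phi>' a) \<le> \<bar>h\<bar> * (3*\<bar>k\<bar>*e)"
      using step1[of a] unfolding \<phi>'_def by (auto intro: mult_left_mono)
    have "norm (\<phi> (a+h) - \<phi> a) \<le> norm (\<phi> (a+h) - \<phi> a - h *\<^sub>R \<phi>' a) + norm (h *\<^sub>R \<phi>' a)"
      by (rule order_trans[OF _ norm_triangle_ineq]) simp
    also have "\<dots> \<le> 9*\<bar>h\<bar>*\<bar>k\<bar>*e" using A B by (simp add: algebra_simps)
    finally have "norm (\<phi> (a+h) - \<phi> a) \<le> 9*\<bar>h\<bar>*\<bar>k\<bar>*e" .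
    moreover have "\<phi> (a+h) - \<phi> a = f(a+h,b+k) - f(a+h,b) - f(a,b+k) + f(a,b) - (h*k) *\<^sub>R c"
      unfolding \<phi>_def by (simp add: algebra_simps flip: scaleR_add_left scaleR_diff_left)
    ultimately show "norm (f(a+h,b+k) - f(a+h,b) - f(a,b+k) + f(a,b) - (h*k) *\<^sub>R pv (pu f) (a,b)) \<le> 9*\<bar>h\<bar>*\<bar>k\<bar>*e"
      unfolding c_def by simp
  qed
qed



lemma pu_swap: "pu (\<lambda>q. f (snd q, fst q)) q = pv f (snd q, fst q)"
  unfolding pu_def pv_def by simp
lemma pv_swap: "pv (\<lambda>q. f (snd q, fst q)) q = pu f (snd q, fst q)"
  unfolding pu_def pv_def by simp

lemma schwarz:
  fixes f :: "real \<times> real \<Rightarrow> 'a::real_normed_vector"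
  assumes D: "open D" "p \<in> D"
   and hu: "\<And>q. q\<in>D \<Longrightarrow> ((\<lambda>s. f (s, snd q)) has_vector_derivative pu f q) (at (fst q))"
   and hv: "\<And>q. q\<in>D \<Longrightarrow> ((\<lambda>t. f (fst q, t)) has_vector_derivative pv f q) (at (snd q))"
   and huv: "\<And>q. q\<in>D \<Longrightarrow> ((\<lambda>t. pu f (fst q, t)) has_vector_derivative pv (pu f) q) (at (snd q))"
   and hvu: "\<And>q. q\<in>D \<Longrightarrow> ((\<lambda>s. pv f (s, snd q)) has_vector_derivative pu (pv f) q) (at (fst q))"
   and c1: "continuous_on D (pv (pu f))"
   and c2: "continuous_on D (pu (pv f))"
  shows "pv (pu f) p = pu (pv f) p"
proof -
  obtain a b where p: "p = (a,b)" by (cases p)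
  define g where "g q = f (snd q, fst q)" for q
  define D' where "D' = {q. (snd q, fst q) \<in> D}"
  have oD': "open D'"
  proof -
    have "continuous_on UNIV (\<lambda>q::real\<times>real. (snd q, fst q))" by (intro continuous_intros)
    then have "open ((\<lambda>q::real\<times>real. (snd q, fst q)) -` D \<inter> UNIV)"
      using continuous_on_open_vimage[OF open_UNIV] D(1) by blast
    then show ?thesis by (simp add: D'_def vimage_def)
  qed
  have pug: "pu g q = pv f (snd q, fst q)" for q unfolding g_def by (rule pu_swap)
  have pvpug: "pv (pu g) q = pu (pv f) (snd q, fst q)" for q
    unfolding pug[abs_def] by (rule pv_swap)
  have "pv (pu g) = (\<lambda>q. pu (pv f) (snd q, fst q))" using pvpug by auto
  have cg: "continuous_on D' (pv (pu g))"
  proof -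
    have "continuous_on D' ((pu (pv f)) \<circ> (\<lambda>q. (snd q, fst q)))"
      by (rule continuous_on_compose) (auto intro!: continuous_intros c2[THEN continuous_on_subset] simp: D'_def)
    then show ?thesis using pvpug by (simp add: o_def)
  qed
  have hug: "((\<lambda>s. g (s, snd q)) has_vector_derivative pu g q) (at (fst q))" if "q \<in> D'" for q
    using hv[of "(snd q, fst q)"] that unfolding pug g_def D'_def by simp
  have huvg: "((\<lambda>t. pu g (fst q, t)) has_vector_derivative pv (pu g) q) (at (snd q))" if "q \<in> D'" for q
    using hvu[of "(snd q, fst q)"] that unfolding pug pvpug D'_def by simp
  show ?thesis
  proof (rule ccontr)
    assume ne: "pv (pu f) p \<noteq> pu (pv f) p"
    define e where "e = norm (pv (pu f) p - pu (pv f) p) / 36"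
    have e: "e > 0" using ne by (simp add: e_def)
    obtain d1 where d1: "d1 > 0" "\<And>h k. \<bar>h\<bar> < d1 \<Longrightarrow> \<bar>k\<bar> < d1 \<Longrightarrow>
      norm (f(a+h,b+k) - f(a+h,b) - f(a,b+k) + f(a,b) - (h*k) *\<^sub>R pv (pu f) (a,b)) \<le> 9*\<bar>h\<bar>*\<bar>k\<bar>*e"
      using schwarz_half[OF D(1) D(2)[unfolded p] hu huv c1 e] by blast
    have ba: "(b,a) \<in> D'" using D(2) p by (simp add: D'_def)
    obtain d2 where d2: "d2 > 0" "\<And>h k. \<bar>h\<bar> < d2 \<Longrightarrow> \<bar>k\<bar> < d2 \<Longrightarrow>
      norm (g(b+h,a+k) - g(b+h,a) - g(b,a+k) + g(b,a) - (h*k) *\<^sub>R pv (pu g) (b,a)) \<le> 9*\<bar>h\<bar>*\<bar>k\<bar>*e"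
      using schwarz_half[OF oD' ba hug huvg cg e] by blast
    define h where "h = min d1 d2 / 2"
    have h: "h > 0" "\<bar>h\<bar> < d1" "\<bar>h\<bar> < d2" using d1 d2 by (auto simp: h_def)
    define \<Delta> where "\<Delta> = f(a+h,b+h) - f(a+h,b) - f(a,b+h) + f(a,b)"
    have A: "norm (\<Delta> - (h*h) *\<^sub>R pv (pu f) p) \<le> 9*h*h*e"
      using d1(2)[OF h(2) h(2)] h(1) by (simp add: \<Delta>_def p)
    have B: "norm (\<Delta> - (h*h) *\<^sub>R pu (pv f) p) \<le> 9*h*h*e"
      using d2(2)[OF h(3) h(3)] h(1) by (simp add: \<Delta>_def p g_def pvpug algebra_simps)
    have "norm ((h*h) *\<^sub>R (pv (pu f) p - pu (pv f) p)) = norm ((\<Delta> - (h*h) *\<^sub>R pu (pv f) p) - (\<Delta> - (h*h) *\<^sub>R pv (pu f) p))"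
      by (simp add: algebra_simps)
    also have "\<dots> \<le> norm (\<Delta> - (h*h) *\<^sub>R pu (pv f) p) + norm (\<Delta> - (h*h) *\<^sub>R pv (pu f) p)"
      by (rule norm_triangle_ineq4)
    also have "\<dots> \<le> 18*h*h*e" using A B by simp
    finally have "norm ((h*h) *\<^sub>R (pv (pu f) p - pu (pv f) p)) \<le> 18*h*h*e" .
    then have "\<bar>h*h\<bar> * norm (pv (pu f) p - pu (pv f) p) \<le> 18*h*h*e" by (simp only: norm_scaleR)
    then have "h*h * norm (pv (pu f) p - pu (pv f) p) \<le> h*h*(18*e)" by (simp add: mult.assoc)
    then have "norm (pv (pu f) p - pu (pv f) p) \<le> 18*e" using h(1) by (simp add: mult_le_cancel_left_pos)
    then show False using e unfolding e_def by simp
  qed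
qed



lemma span3:
  fixes a b w :: "real^3"
  assumes ab: "a \<bullet> b = 0" and n: "cross3 a b \<noteq> 0" and w: "w \<bullet> cross3 a b = 0"
  shows "w = ((w \<bullet> a)/(a \<bullet> a)) *\<^sub>R a + ((w \<bullet> b)/(b \<bullet> b)) *\<^sub>R b"
proof -
  have a0: "a \<noteq> 0" and b0: "b \<noteq> 0" using n by auto
  then have aa: "a \<bullet> a \<noteq> 0" and bb: "b \<bullet> b \<noteq> 0" by auto
  define r where "r = w - (((w \<bullet> a)/(a \<bullet> a)) *\<^sub>R a + ((w \<bullet> b)/(b \<bullet> b)) *\<^sub>R b)"
  have ra: "a \<bullet> r = 0" using aa ab unfolding r_def by (simp add: inner_diff_right inner_add_right inner_commute)
  have rb: "b \<bullet> r = 0" using bb ab unfolding r_def by (simp add: inner_diff_right inner_add_right inner_commute)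
  have rn: "cross3 a b \<bullet> r = 0" using w unfolding r_def
    by (simp add: inner_diff_right inner_add_right inner_commute dot_cross_self)
  have "cross3 (cross3 a b) r = 0" using ra rb by (simp add: cross_triple)
  then have "(norm (cross3 a b) * norm r)\<^sup>2 = 0" using norm_cross_dot[of "cross3 a b" r] rn by simp
  then have "r = 0" using n by simp
  then show ?thesis unfolding r_def by simp
qed

lemma bb_cross: "bounded_bilinear (cross3 :: real^3 \<Rightarrow> real^3 \<Rightarrow> real^3)"
  using bilinear_cross bilinear_conv_bounded_bilinear by blast

lemma cross_vd:
  fixes f g :: "real \<Rightarrow> real^3"
  assumes "(f has_vector_derivative f') (at t)" "(g has_vector_derivative g') (at t)"
  shows "((\<lambda>t. cross3 (f t) (g t)) has_vector_derivative (cross3 (f t) g' + cross3 f' (g t))) (at t)"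
  using bounded_bilinear.has_vector_derivative[OF bb_cross assms] .

lemma inner_vd:
  fixes f g :: "real \<Rightarrow> 'a::real_inner"
  assumes "(f has_vector_derivative f') (at t)" "(g has_vector_derivative g') (at t)"
  shows "((\<lambda>t. f t \<bullet> g t) has_vector_derivative (f t \<bullet> g' + f' \<bullet> g t)) (at t)"
  using bounded_bilinear.has_vector_derivative[OF bounded_bilinear_inner assms] .

lemma unit_vd:
  fixes n :: "real \<Rightarrow> real^3"
  assumes "(n has_vector_derivative n') (at t)" "n t \<noteq> 0"
  shows "(\<lambda>t. (1 / norm (n t)) *\<^sub>R n t) differentiable (at t)"
proof -
  have dn: "n differentiable (at t)" using assms(1) by (rule differentiableI_vector)
  have "(norm \<circ> n) differentiable (at t)"
    by (rule differentiable_chain_at[OF dn]) (simp add: assms(2))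
  then have "(\<lambda>t. norm (n t)) differentiable (at t)" by (simp add: o_def)
  then have "(\<lambda>t. 1 / norm (n t)) differentiable (at t)"
    using assms(2) by (intro differentiable_divide) auto
  then show ?thesis using dn by (intro differentiable_scaleR)
qed

lemma smooth_schwarz:
  assumes "smooth_on_dom D f" "open D" "p \<in> D"
  shows "pv (pu f) p = pu (pv f) p"
  by (rule schwarz[OF assms(2,3)])
     (auto intro: smooth_hu smooth_hv smooth_cont smooth_pu smooth_pv assms(1))



context
  fixes D x
  assumes reg: "regular_surface D x" and pp: "principal_params D x"
begin

lemma oD: "open D" using reg by (simp add: regular_surface_def)
lemma sm: "smooth_on_dom D x" using reg by (simp add: regular_surface_def)
lemma nz: "p \<in> D \<Longrightarrow> cross3 (pu x p) (pv x p) \<noteq> 0"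
  using reg by (simp add: regular_surface_def xu_def xv_def)
lemma Epos: "p \<in> D \<Longrightarrow> EE x p > 0"
proof -
  assume "p \<in> D"
  then have "pu x p \<noteq> 0" using nz[of p] by (metis cross_zero_left)
  then show ?thesis by (simp add: EE_def xu_def)
qed
lemma Gpos: "p \<in> D \<Longrightarrow> GG x p > 0"
proof -
  assume "p \<in> D"
  then have "pv x p \<noteq> 0" using nz[of p] by (metis cross_zero_right)
  then show ?thesis by (simp add: GG_def xv_def)
qed
lemma F0: "p \<in> D \<Longrightarrow> pu x p \<bullet> pv x p = 0"
  using pp by (simp add: principal_params_def FF_def xu_def xv_def)
lemma M0: "p \<in> D \<Longrightarrow> pv (pu x) p \<bullet> unit_normal x p = 0"
  using pp by (simp add: principal_params_def MM_def xu_def xv_def)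

lemma Ndef: "unit_normal x p = (1 / norm (cross3 (pu x p) (pv x p))) *\<^sub>R cross3 (pu x p) (pv x p)"
  by (simp add: unit_normal_def xu_def xv_def)

lemma NN1: "p \<in> D \<Longrightarrow> unit_normal x p \<bullet> unit_normal x p = 1"
  using nz[of p] by (simp add: Ndef power2_norm_eq_inner[symmetric] divide_simps)
lemma NXu: "p \<in> D \<Longrightarrow> pu x p \<bullet> unit_normal x p = 0"
  by (simp add: Ndef dot_cross_self)
lemma NXv: "p \<in> D \<Longrightarrow> pv x p \<bullet> unit_normal x p = 0"
  by (simp add: Ndef dot_cross_self inner_commute)

lemma sym1: "p \<in> D \<Longrightarrow> pu (pv x) p = pv (pu x) p"
  using smooth_schwarz[OF sm oD] by simp
lemma sym2: "p \<in> D \<Longrightarrow> pv (pu (pu x)) p = pu (pv (pu x)) p"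
  using smooth_schwarz[OF smooth_pu[OF sm] oD] by simp
lemma sym3: "p \<in> D \<Longrightarrow> pu (pv (pv x)) p = pv (pu (pv x)) p"
  using smooth_schwarz[OF smooth_pv[OF sm] oD] by simp

lemma hNu: assumes "p \<in> D"
  shows "((\<lambda>s. unit_normal x (s, snd p)) has_vector_derivative pu (unit_normal x) p) (at (fst p))"
proof -
  have d: "((\<lambda>s. cross3 (pu x (s, snd p)) (pv x (s, snd p))) has_vector_derivative
     (cross3 (pu x p) (pu (pv x) p) + cross3 (pu (pu x) p) (pv x p))) (at (fst p))"
    using cross_vd[OF smooth_hu[OF smooth_pu[OF sm] assms] smooth_hu[OF smooth_pv[OF sm] assms]] by simp
  have "(\<lambda>s. unit_normal x (s, snd p)) differentiable (at (fst p))"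
    unfolding Ndef using unit_vd[OF d] nz[OF assms] by simp
  then show ?thesis unfolding pu_def by (simp add: vector_derivative_works)
qed

lemma hNv: assumes "p \<in> D"
  shows "((\<lambda>t. unit_normal x (fst p, t)) has_vector_derivative pv (unit_normal x) p) (at (snd p))"
proof -
  have d: "((\<lambda>t. cross3 (pu x (fst p, t)) (pv x (fst p, t))) has_vector_derivative
     (cross3 (pu x p) (pv (pv x) p) + cross3 (pv (pu x) p) (pv x p))) (at (snd p))"
    using cross_vd[OF smooth_hv[OF smooth_pu[OF sm] assms] smooth_hv[OF smooth_pv[OF sm] assms]] by simp
  have "(\<lambda>t. unit_normal x (fst p, t)) differentiable (at (snd p))"
    unfolding Ndef using unit_vd[OF d] nz[OF assms] by simp
  then show ?thesis unfolding pv_def by (simp add: vector_derivative_works)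
qed


lemma NXu': "q \<in> D \<Longrightarrow> unit_normal x q \<bullet> pu x q = 0" using NXu by (simp add: inner_commute)
lemma NXv': "q \<in> D \<Longrightarrow> unit_normal x q \<bullet> pv x q = 0" using NXv by (simp add: inner_commute)

lemma perpN_cross: assumes "p \<in> D" "w \<bullet> unit_normal x p = 0"
  shows "w \<bullet> cross3 (pu x p) (pv x p) = 0"
  using assms(2) nz[OF assms(1)] by (simp add: Ndef)

lemma Nu: assumes "p \<in> D" shows "pu (unit_normal x) p = (- nu1 x p) *\<^sub>R pu x p"
proof -
  define Nu where "Nu = pu (unit_normal x) p"
  have hN: "((\<lambda>s. unit_normal x (s, snd p)) has_vector_derivative Nu) (at (fst p))"
    using hNu[OF assms] by (simp add: Nu_def)
  have a: "unit_normal x p \<bullet> Nu + Nu \<bullet> unit_normal x p = 0"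
    using deriv_eq_u[OF oD assms, of "\<lambda>q. unit_normal x q \<bullet> unit_normal x q" "\<lambda>q. 1"]
      NN1 inner_vd[OF hN hN] has_vector_derivative_const by simp
  have b: "unit_normal x p \<bullet> pu (pu x) p + Nu \<bullet> pu x p = 0"
    using deriv_eq_u[OF oD assms, of "\<lambda>q. unit_normal x q \<bullet> pu x q" "\<lambda>q. 0"]
      NXu' inner_vd[OF hN smooth_hu[OF smooth_pu[OF sm] assms]] has_vector_derivative_const by simp
  have c: "unit_normal x p \<bullet> pu (pv x) p + Nu \<bullet> pv x p = 0"
    using deriv_eq_u[OF oD assms, of "\<lambda>q. unit_normal x q \<bullet> pv x q" "\<lambda>q. 0"]
      NXv' inner_vd[OF hN smooth_hu[OF smooth_pv[OF sm] assms]] has_vector_derivative_const by simp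
  have a': "Nu \<bullet> unit_normal x p = 0" using a by (simp add: inner_commute)
  have c': "Nu \<bullet> pv x p = 0" using c sym1[OF assms] M0[OF assms] by (simp add: inner_commute)
  have b': "Nu \<bullet> pu x p = - LL x p" using b by (simp add: LL_def xu_def inner_commute)
  have "Nu = ((Nu \<bullet> pu x p)/(pu x p \<bullet> pu x p)) *\<^sub>R pu x p + ((Nu \<bullet> pv x p)/(pv x p \<bullet> pv x p)) *\<^sub>R pv x p"
    by (rule span3[OF F0[OF assms] nz[OF assms] perpN_cross[OF assms a']])
  then show ?thesis using b' c' unfolding Nu_def by (simp add: nu1_def EE_def xu_def)
qed

lemma Nv: assumes "p \<in> D" shows "pv (unit_normal x) p = (- nu2 x p) *\<^sub>R pv x p"
proof -
  define Nv where "Nv = pv (unit_normal x) p"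
  have hN: "((\<lambda>t. unit_normal x (fst p, t)) has_vector_derivative Nv) (at (snd p))"
    using hNv[OF assms] by (simp add: Nv_def)
  have a: "unit_normal x p \<bullet> Nv + Nv \<bullet> unit_normal x p = 0"
    using deriv_eq_v[OF oD assms, of "\<lambda>q. unit_normal x q \<bullet> unit_normal x q" "\<lambda>q. 1"]
      NN1 inner_vd[OF hN hN] has_vector_derivative_const by simp
  have b: "unit_normal x p \<bullet> pv (pu x) p + Nv \<bullet> pu x p = 0"
    using deriv_eq_v[OF oD assms, of "\<lambda>q. unit_normal x q \<bullet> pu x q" "\<lambda>q. 0"]
      NXu' inner_vd[OF hN smooth_hv[OF smooth_pu[OF sm] assms]] has_vector_derivative_const by simp
  have c: "unit_normal x p \<bullet> pv (pv x) p + Nv \<bullet> pv x p = 0"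
    using deriv_eq_v[OF oD assms, of "\<lambda>q. unit_normal x q \<bullet> pv x q" "\<lambda>q. 0"]
      NXv' inner_vd[OF hN smooth_hv[OF smooth_pv[OF sm] assms]] has_vector_derivative_const by simp
  have a': "Nv \<bullet> unit_normal x p = 0" using a by (simp add: inner_commute)
  have b': "Nv \<bullet> pu x p = 0" using b M0[OF assms] by (simp add: inner_commute)
  have c': "Nv \<bullet> pv x p = - NN x p" using c by (simp add: NN_def xv_def inner_commute)
  have "Nv = ((Nv \<bullet> pu x p)/(pu x p \<bullet> pu x p)) *\<^sub>R pu x p + ((Nv \<bullet> pv x p)/(pv x p \<bullet> pv x p)) *\<^sub>R pv x p"
    by (rule span3[OF F0[OF assms] nz[OF assms] perpN_cross[OF assms a']])
  then show ?thesis using b' c' unfolding Nv_def by (simp add: nu2_def GG_def xv_def)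
qed


lemma EE_fun: "EE x = (\<lambda>q. pu x q \<bullet> pu x q)" by (simp add: EE_def[abs_def] xu_def)
lemma GG_fun: "GG x = (\<lambda>q. pv x q \<bullet> pv x q)" by (simp add: GG_def[abs_def] xv_def)

lemma hEv: assumes "p \<in> D"
  shows "((\<lambda>t. EE x (fst p, t)) has_vector_derivative (2 * (pv (pu x) p \<bullet> pu x p))) (at (snd p))"
  using inner_vd[OF smooth_hv[OF smooth_pu[OF sm] assms] smooth_hv[OF smooth_pu[OF sm] assms]]
  by (simp add: EE_fun inner_commute)

lemma hGu: assumes "p \<in> D"
  shows "((\<lambda>s. GG x (s, snd p)) has_vector_derivative (2 * (pu (pv x) p \<bullet> pv x p))) (at (fst p))"
  using inner_vd[OF smooth_hu[OF smooth_pv[OF sm] assms] smooth_hu[OF smooth_pv[OF sm] assms]]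
  by (simp add: GG_fun inner_commute)

lemma codazzi1: assumes p: "p \<in> D"
  and d: "((\<lambda>t. nu1 x (fst p, t)) has_vector_derivative d) (at (snd p))"
  shows "d * EE x p = (nu2 x p - nu1 x p) * (pv (pu x) p \<bullet> pu x p)"
proof -
  define A where "A = pv (pu x) p \<bullet> pu x p"
  define B where "B = pu (pu x) p \<bullet> pv x p"
  define C where "C = pv (pu (pu x)) p \<bullet> unit_normal x p"
  have g1: "((\<lambda>t. nu1 x (fst p, t) * EE x (fst p, t)) has_vector_derivative
      (nu1 x p * (2 * A) + d * EE x p)) (at (snd p))"
    using has_vector_derivative_mult[OF d hEv[OF p]] by (simp add: A_def)
  have g2: "((\<lambda>t. pu (pu x) (fst p, t) \<bullet> unit_normal x (fst p, t)) has_vector_derivative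
      (pu (pu x) p \<bullet> pv (unit_normal x) p + pv (pu (pu x)) p \<bullet> unit_normal x p)) (at (snd p))"
    using inner_vd[OF smooth_hv[OF smooth_pu[OF smooth_pu[OF sm]] p] hNv[OF p]] by simp
  have eq: "nu1 x q * EE x q = pu (pu x) q \<bullet> unit_normal x q" if "q \<in> D" for q
    using Epos[OF that] by (simp add: nu1_def LL_def xu_def)
  have E1: "nu1 x p * (2 * A) + d * EE x p = - nu2 x p * B + C"
    using deriv_eq_v[OF oD p, of "\<lambda>q. nu1 x q * EE x q" "\<lambda>q. pu (pu x) q \<bullet> unit_normal x q", OF eq g1 g2]
    by (simp add: Nv[OF p] B_def C_def)
  have E2: "pu x p \<bullet> pu (pv x) p + pu (pu x) p \<bullet> pv x p = 0"
    using deriv_eq_u[OF oD p, of "\<lambda>q. pu x q \<bullet> pv x q" "\<lambda>q. 0", OF F0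
      inner_vd[OF smooth_hu[OF smooth_pu[OF sm] p] smooth_hu[OF smooth_pv[OF sm] p]] has_vector_derivative_const]
    by simp
  then have E2': "A + B = 0" using sym1[OF p] by (simp add: A_def B_def inner_commute)
  have E3: "pv (pu x) p \<bullet> pu (unit_normal x) p + pu (pv (pu x)) p \<bullet> unit_normal x p = 0"
    using deriv_eq_u[OF oD p, of "\<lambda>q. pv (pu x) q \<bullet> unit_normal x q" "\<lambda>q. 0", OF M0
      inner_vd[OF smooth_hu[OF smooth_pv[OF smooth_pu[OF sm]] p] hNu[OF p]] has_vector_derivative_const]
    by simp
  then have E3': "- nu1 x p * A + C = 0" using sym2[OF p] by (simp add: Nu[OF p] A_def C_def)
  from E1 E2' E3' show ?thesis unfolding A_def[symmetric] by algebra
qed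

lemma codazzi2: assumes p: "p \<in> D"
  and d: "((\<lambda>s. nu2 x (s, snd p)) has_vector_derivative d) (at (fst p))"
  shows "d * GG x p = (nu1 x p - nu2 x p) * (pu (pv x) p \<bullet> pv x p)"
proof -
  define A where "A = pu (pv x) p \<bullet> pv x p"
  define B where "B = pu x p \<bullet> pv (pv x) p"
  define C where "C = pu (pv (pv x)) p \<bullet> unit_normal x p"
  have g1: "((\<lambda>s. nu2 x (s, snd p) * GG x (s, snd p)) has_vector_derivative
      (nu2 x p * (2 * A) + d * GG x p)) (at (fst p))"
    using has_vector_derivative_mult[OF d hGu[OF p]] by (simp add: A_def)
  have g2: "((\<lambda>s. pv (pv x) (s, snd p) \<bullet> unit_normal x (s, snd p)) has_vector_derivative
      (pv (pv x) p \<bullet> pu (unit_normal x) p + pu (pv (pv x)) p \<bullet> unit_normal x p)) (at (fst p))"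
    using inner_vd[OF smooth_hu[OF smooth_pv[OF smooth_pv[OF sm]] p] hNu[OF p]] by simp
  have eq: "nu2 x q * GG x q = pv (pv x) q \<bullet> unit_normal x q" if "q \<in> D" for q
    using Gpos[OF that] by (simp add: nu2_def NN_def xv_def)
  have E1: "nu2 x p * (2 * A) + d * GG x p = - nu1 x p * B + C"
    using deriv_eq_u[OF oD p, of "\<lambda>q. nu2 x q * GG x q" "\<lambda>q. pv (pv x) q \<bullet> unit_normal x q", OF eq g1 g2]
    by (simp add: Nu[OF p] B_def C_def inner_commute)
  have E2: "pu x p \<bullet> pv (pv x) p + pv (pu x) p \<bullet> pv x p = 0"
    using deriv_eq_v[OF oD p, of "\<lambda>q. pu x q \<bullet> pv x q" "\<lambda>q. 0", OF F0
      inner_vd[OF smooth_hv[OF smooth_pu[OF sm] p] smooth_hv[OF smooth_pv[OF sm] p]] has_vector_derivative_const]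
    by simp
  then have E2': "A + B = 0" using sym1[OF p] by (simp add: A_def B_def inner_commute)
  have M0': "pu (pv x) q \<bullet> unit_normal x q = 0" if "q \<in> D" for q
    using M0[OF that] sym1[OF that] by simp
  have E3: "pu (pv x) p \<bullet> pv (unit_normal x) p + pv (pu (pv x)) p \<bullet> unit_normal x p = 0"
    using deriv_eq_v[OF oD p, of "\<lambda>q. pu (pv x) q \<bullet> unit_normal x q" "\<lambda>q. 0", OF M0'
      inner_vd[OF smooth_hv[OF smooth_pu[OF smooth_pv[OF sm]] p] hNv[OF p]] has_vector_derivative_const]
    by simp
  then have E3': "- nu2 x p * A + C = 0" using sym3[OF p] by (simp add: Nv[OF p] A_def C_def)
  from E1 E2' E3' show ?thesis unfolding A_def[symmetric] by algebra
qed

end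


lemma zero_partials_const:
  fixes h :: "real \<times> real \<Rightarrow> real"
  assumes oD: "open D" and cD: "connected D"
    and hu: "\<And>q. q\<in>D \<Longrightarrow> ((\<lambda>s. h (s, snd q)) has_real_derivative 0) (at (fst q))"
    and hv: "\<And>q. q\<in>D \<Longrightarrow> ((\<lambda>t. h (fst q, t)) has_real_derivative 0) (at (snd q))"
  shows "\<exists>c. \<forall>q\<in>D. h q = c"
proof -
  have "h constant_on D"
  proof (rule locally_constant_imp_constant[OF cD])
    fix a assume a: "a \<in> D"
    obtain r where r: "r > 0" "ball a r \<subseteq> D" using oD a openE by blast
    obtain a1 a2 where a12: "a = (a1, a2)" by (cases a)
    have "\<forall>y\<in>ball a r. h y = h a"
    proof
      fix y assume y: "y \<in> ball a r"
      obtain y1 y2 where y12: "y = (y1, y2)" by (cases y)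
      have dy: "sqrt ((y1 - a1)\<^sup>2 + (y2 - a2)\<^sup>2) < r"
        using y by (simp add: a12 y12 dist_Pair_Pair dist_real_def dist_commute power2_commute)
      have seg1: "(s, a2) \<in> D" if "s \<in> closed_segment a1 y1" for s
      proof -
        have "\<bar>s - a1\<bar> \<le> \<bar>y1 - a1\<bar>" using seg_bound[of s a1 "y1 - a1"] that by simp
        then have "(s - a1)\<^sup>2 \<le> (y1 - a1)\<^sup>2" by (simp add: abs_le_square_iff)
        then have "sqrt ((s - a1)\<^sup>2) \<le> sqrt ((y1 - a1)\<^sup>2 + (y2 - a2)\<^sup>2)"
          by (intro real_sqrt_le_mono) (simp add: add_increasing2)
        then have "dist a (s, a2) < r" using dy by (simp add: a12 dist_Pair_Pair dist_real_def power2_commute)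
        then show ?thesis using r(2) by auto
      qed
      have seg2: "(y1, t) \<in> D" if "t \<in> closed_segment a2 y2" for t
      proof -
        have "\<bar>t - a2\<bar> \<le> \<bar>y2 - a2\<bar>" using seg_bound[of t a2 "y2 - a2"] that by simp
        then have "(t - a2)\<^sup>2 \<le> (y2 - a2)\<^sup>2" by (simp add: abs_le_square_iff)
        then have "sqrt ((y1 - a1)\<^sup>2 + (t - a2)\<^sup>2) \<le> sqrt ((y1 - a1)\<^sup>2 + (y2 - a2)\<^sup>2)"
          by (intro real_sqrt_le_mono) simp
        then have "sqrt ((y1 - a1)\<^sup>2 + (t - a2)\<^sup>2) < r" using dy by linarith
        then have "dist a (y1, t) < r" by (simp add: a12 dist_Pair_Pair dist_real_def power2_commute)
        then show ?thesis using r(2) by auto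
      qed
      obtain c1 where c1: "\<forall>s\<in>closed_segment a1 y1. h (s, a2) = c1"
        using has_field_derivative_zero_constant[of "closed_segment a1 y1" "\<lambda>s. h (s, a2)"]
          hu[OF seg1] by (auto intro: has_field_derivative_at_within)
      obtain c2 where c2: "\<forall>t\<in>closed_segment a2 y2. h (y1, t) = c2"
        using has_field_derivative_zero_constant[of "closed_segment a2 y2" "\<lambda>t. h (y1, t)"]
          hv[OF seg2] by (auto intro: has_field_derivative_at_within)
      have "h (y1, a2) = h (a1, a2)" using c1 by auto
      moreover have "h (y1, y2) = h (y1, a2)" using c2 by auto
      ultimately show "h y = h a" by (simp add: a12 y12)
    qed
    moreover have "openin (top_of_set D) (ball a r)" using open_subset[OF r(2)] by simp
    moreover have "a \<in> ball a r" using r(1) by simp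
    ultimately show "\<exists>T. openin (top_of_set D) T \<and> a \<in> T \<and> (\<forall>x\<in>T. h x = h a)"
      by blast
  qed
  then show ?thesis by (auto simp: constant_on_def)
qed



lemma d_lnsqrt:
  assumes "0 < e t" "(e has_real_derivative e') (at t)"
  shows "((\<lambda>t. ln (sqrt (e t))) has_real_derivative e' / (2 * e t)) (at t)"
proof -
  have ss: "sqrt (e t) * sqrt (e t) = e t" using assms(1) by simp
  have "((\<lambda>t. ln (sqrt (e t))) has_real_derivative inverse (sqrt (e t)) * e' / (sqrt (e t) * 2)) (at t)"
    using assms by (auto intro!: derivative_eq_intros)
  moreover have "inverse (sqrt (e t)) * e' / (sqrt (e t) * 2) = e' / (2 * e t)"
    using assms(1) ss by (simp add: field_simps)
  ultimately show ?thesis by simp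
qed

lemma d_lndiff:
  assumes "(f has_real_derivative f') (at t)" "(g has_real_derivative g') (at t)" "f t - g t > 0"
  shows "((\<lambda>t. ln (f t - g t)) has_real_derivative (f' - g')/(f t - g t)) (at t)"
  using assms by (auto intro!: derivative_eq_intros)

lemma partial_u_of_diff:
  fixes \<nu> :: "real \<times> real \<Rightarrow> real"
  assumes "\<nu> differentiable (at p)"
  shows "((\<lambda>s. \<nu> (s, snd p)) has_real_derivative pu \<nu> p) (at (fst p))"
proof -
  have d1: "(\<lambda>s::real. (s, snd p)) differentiable (at (fst p))"
    by (intro derivative_intros)
  have "(\<nu> \<circ> (\<lambda>s. (s, snd p))) differentiable (at (fst p))"
    by (rule differentiable_chain_at[OF d1]) (simp add: assms)
  then have "(\<lambda>s. \<nu> (s, snd p)) differentiable (at (fst p))" by (simp add: o_def)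
  then show ?thesis unfolding pu_def has_real_derivative_iff_has_vector_derivative
    by (simp add: vector_derivative_works)
qed

lemma partial_v_of_diff:
  fixes \<nu> :: "real \<times> real \<Rightarrow> real"
  assumes "\<nu> differentiable (at p)"
  shows "((\<lambda>t. \<nu> (fst p, t)) has_real_derivative pv \<nu> p) (at (snd p))"
proof -
  have d1: "(\<lambda>t::real. (fst p, t)) differentiable (at (snd p))"
    by (intro derivative_intros)
  have "(\<nu> \<circ> (\<lambda>t. (fst p, t))) differentiable (at (snd p))"
    by (rule differentiable_chain_at[OF d1]) (simp add: assms)
  then have "(\<lambda>t. \<nu> (fst p, t)) differentiable (at (snd p))" by (simp add: o_def)
  then show ?thesis unfolding pv_def has_real_derivative_iff_has_vector_derivative
    by (simp add: vector_derivative_works)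
qed



theorem proposition4p6:
  fixes D :: "(real \<times> real) set" and x :: surf
    and I :: "real set" and f g \<Phi> \<Psi> :: "real \<Rightarrow> real" and \<nu> :: "real \<times> real \<Rightarrow> real"
  assumes "regular_surface D x"
    and "principal_params D x"
    and "strongly_regular D x"
    and "weingarten_data D x I f g \<nu>"
    and "\<forall>t\<in>I. (\<Phi> has_real_derivative (deriv f t / (f t - g t))) (at t)"
    and "\<forall>t\<in>I. (\<Psi> has_real_derivative (deriv g t / (g t - f t))) (at t)"
  shows "geometric_principal_params D x \<nu> \<Phi> \<Psi> \<longleftrightarrow>
         (\<exists>c. \<forall>p\<in>D. sqrt (EE x p * GG x p) * (nu1 x p - nu2 x p) = c)"
proof -
  note reg = assms(1) and pp = assms(2)
  have oD: "open D" and cD: "connected D" using reg by (auto simp: regular_surface_def)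
  have sr: "\<And>p. p\<in>D \<Longrightarrow> nu1 x p - nu2 x p > 0" using assms(3) by (simp add: strongly_regular_def)
  have I: "is_interval I" and fg: "\<And>t. t\<in>I \<Longrightarrow> f differentiable (at t) \<and> g differentiable (at t) \<and> f t - g t > 0"
    and nuD: "\<And>p. p\<in>D \<Longrightarrow> \<nu> p \<in> I \<and> \<nu> differentiable (at p) \<and> nu1 x p = f (\<nu> p) \<and> nu2 x p = g (\<nu> p)"
    using assms(4) unfolding weingarten_data_def by auto
  have df: "\<And>t. t\<in>I \<Longrightarrow> (f has_real_derivative deriv f t) (at t)"
    using fg DERIV_deriv_iff_real_differentiable by blast
  have dg: "\<And>t. t\<in>I \<Longrightarrow> (g has_real_derivative deriv g t) (at t)"
    using fg DERIV_deriv_iff_real_differentiable by blast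
  have dPhi: "\<And>t. t\<in>I \<Longrightarrow> (\<Phi> has_real_derivative (deriv f t / (f t - g t))) (at t)" using assms(5) by blast
  have dPsi: "\<And>t. t\<in>I \<Longrightarrow> (\<Psi> has_real_derivative (deriv g t / (g t - f t))) (at t)" using assms(6) by blast
  obtain K where K: "\<And>t. t\<in>I \<Longrightarrow> \<Phi> t + \<Psi> t - ln (f t - g t) = K"
  proof -
    have "\<exists>c. \<forall>t\<in>I. \<Phi> t + \<Psi> t - ln (f t - g t) = c"
    proof (rule has_field_derivative_zero_constant)
      show "convex I" using I by (simp add: is_interval_convex)
      fix t assume t: "t \<in> I"
      have "((\<lambda>t. \<Phi> t + \<Psi> t - ln (f t - g t)) has_real_derivative
          (deriv f t / (f t - g t) + deriv g t / (g t - f t) - (deriv f t - deriv g t)/(f t - g t))) (at t)"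
        by (intro DERIV_add DERIV_diff dPhi dPsi d_lndiff df dg t) (use fg t in blast)
      moreover have "deriv f t / (f t - g t) + deriv g t / (g t - f t) - (deriv f t - deriv g t)/(f t - g t) = 0"
      proof -
        have "g t - f t = - (f t - g t)" by simp
        then have "deriv g t / (g t - f t) = - (deriv g t / (f t - g t))"
          using divide_minus_right[of "deriv g t" "f t - g t"] by simp
        then show ?thesis by (simp add: diff_divide_distrib)
      qed
      ultimately show "((\<lambda>t. \<Phi> t + \<Psi> t - ln (f t - g t)) has_real_derivative 0) (at t within I)"
        by (auto intro: has_field_derivative_at_within)
    qed
    then show ?thesis using that by blast
  qed
  define lam where "lam q = ln (sqrt (EE x q)) + \<Phi> (\<nu> q)" for q
  define mu where "mu q = ln (sqrt (GG x q)) + \<Psi> (\<nu> q)" for q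
  define S where "S q = sqrt (EE x q * GG x q) * (nu1 x q - nu2 x q)" for q
  have Spos: "\<And>q. q \<in> D \<Longrightarrow> S q > 0"
    unfolding S_def using Epos[OF reg pp] Gpos[OF reg pp] sr by simp
  have sum: "lam q + mu q = ln (S q) + K" if q: "q \<in> D" for q
  proof -
    have E: "EE x q > 0" and G: "GG x q > 0" using Epos[OF reg pp q] Gpos[OF reg pp q] by auto
    have n: "nu1 x q - nu2 x q > 0" using sr[OF q] .
    have "\<Phi> (\<nu> q) + \<Psi> (\<nu> q) = ln (nu1 x q - nu2 x q) + K"
      using K[of "\<nu> q"] nuD[OF q] by simp
    moreover have "ln (S q) = ln (sqrt (EE x q)) + ln (sqrt (GG x q)) + ln (nu1 x q - nu2 x q)"
      unfolding S_def using E G n by (simp add: real_sqrt_mult ln_mult)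
    ultimately show ?thesis unfolding lam_def mu_def by simp
  qed
  have lam_v: "((\<lambda>t. lam (fst p, t)) has_real_derivative 0) (at (snd p))" if p: "p \<in> D" for p
  proof -
    have E: "EE x p > 0" using Epos[OF reg pp p] .
    define A where "A = pv (pu x) p \<bullet> pu x p"
    have hE: "((\<lambda>t. EE x (fst p, t)) has_real_derivative 2 * A) (at (snd p))"
      using hEv[OF reg pp p] unfolding A_def has_real_derivative_iff_has_vector_derivative .
    have l1: "((\<lambda>t. ln (sqrt (EE x (fst p, t)))) has_real_derivative 2 * A / (2 * EE x p)) (at (snd p))"
      using d_lnsqrt[of "\<lambda>t. EE x (fst p, t)", OF _ hE] E by simp
    have nuI: "\<nu> p \<in> I" and nd: "\<nu> differentiable (at p)" using nuD[OF p] by auto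
    have hnu: "((\<lambda>t. \<nu> (fst p, t)) has_real_derivative pv \<nu> p) (at (snd p))"
      using partial_v_of_diff[OF nd] .
    have dPhi': "(\<Phi> has_real_derivative deriv f (\<nu> p) / (f (\<nu> p) - g (\<nu> p))) (at (\<nu> (fst p, snd p)))"
      using dPhi[OF nuI] by simp
    have df': "(f has_real_derivative deriv f (\<nu> p)) (at (\<nu> (fst p, snd p)))"
      using df[OF nuI] by simp
    have l2: "((\<lambda>t. \<Phi> (\<nu> (fst p, t))) has_real_derivative deriv f (\<nu> p) / (f (\<nu> p) - g (\<nu> p)) * pv \<nu> p) (at (snd p))"
      using DERIV_chain2[OF dPhi' hnu] by simp
    have fnu: "((\<lambda>t. f (\<nu> (fst p, t))) has_real_derivative deriv f (\<nu> p) * pv \<nu> p) (at (snd p))"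
      using DERIV_chain2[OF df' hnu] by simp
    have "((\<lambda>t. nu1 x (fst p, t)) has_real_derivative deriv f (\<nu> p) * pv \<nu> p) (at (snd p))"
      apply (rule has_field_derivative_transform_within_open[OF fnu line_open_v[OF oD, of "fst p"]])
      using p by (auto dest: nuD)
    then have c1: "deriv f (\<nu> p) * pv \<nu> p * EE x p = (nu2 x p - nu1 x p) * A"
      using codazzi1[OF reg pp p] unfolding A_def has_real_derivative_iff_has_vector_derivative by blast
    have "((\<lambda>t. lam (fst p, t)) has_real_derivative
        2 * A / (2 * EE x p) + deriv f (\<nu> p) / (f (\<nu> p) - g (\<nu> p)) * pv \<nu> p) (at (snd p))"
      unfolding lam_def using DERIV_add[OF l1 l2] by simp
    moreover have "2 * A / (2 * EE x p) + deriv f (\<nu> p) / (f (\<nu> p) - g (\<nu> p)) * pv \<nu> p = 0"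
    proof -
      have fg': "f (\<nu> p) - g (\<nu> p) = nu1 x p - nu2 x p" using nuD[OF p] by simp
      have n: "nu1 x p - nu2 x p > 0" using sr[OF p] .
      have "deriv f (\<nu> p) * pv \<nu> p = (nu2 x p - nu1 x p) * A / EE x p" using c1 E by (simp add: field_simps)
      then show ?thesis unfolding fg' using E n by (simp add: field_simps)
    qed
    ultimately show ?thesis by simp
  qed
  have mu_u: "((\<lambda>s. mu (s, snd p)) has_real_derivative 0) (at (fst p))" if p: "p \<in> D" for p
  proof -
    have G: "GG x p > 0" using Gpos[OF reg pp p] .
    define A where "A = pu (pv x) p \<bullet> pv x p"
    have hG: "((\<lambda>s. GG x (s, snd p)) has_real_derivative 2 * A) (at (fst p))"
      using hGu[OF reg pp p] unfolding A_def has_real_derivative_iff_has_vector_derivative .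
    have l1: "((\<lambda>s. ln (sqrt (GG x (s, snd p)))) has_real_derivative 2 * A / (2 * GG x p)) (at (fst p))"
      using d_lnsqrt[of "\<lambda>s. GG x (s, snd p)", OF _ hG] G by simp
    have nuI: "\<nu> p \<in> I" and nd: "\<nu> differentiable (at p)" using nuD[OF p] by auto
    have hnu: "((\<lambda>s. \<nu> (s, snd p)) has_real_derivative pu \<nu> p) (at (fst p))"
      using partial_u_of_diff[OF nd] .
    have dPsi': "(\<Psi> has_real_derivative deriv g (\<nu> p) / (g (\<nu> p) - f (\<nu> p))) (at (\<nu> (fst p, snd p)))"
      using dPsi[OF nuI] by simp
    have dg': "(g has_real_derivative deriv g (\<nu> p)) (at (\<nu> (fst p, snd p)))"
      using dg[OF nuI] by simp
    have l2: "((\<lambda>s. \<Psi> (\<nu> (s, snd p))) has_real_derivative deriv g (\<nu> p) / (g (\<nu> p) - f (\<nu> p)) * pu \<nu> p) (at (fst p))"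
      using DERIV_chain2[OF dPsi' hnu] by simp
    have gnu: "((\<lambda>s. g (\<nu> (s, snd p))) has_real_derivative deriv g (\<nu> p) * pu \<nu> p) (at (fst p))"
      using DERIV_chain2[OF dg' hnu] by simp
    have "((\<lambda>s. nu2 x (s, snd p)) has_real_derivative deriv g (\<nu> p) * pu \<nu> p) (at (fst p))"
      apply (rule has_field_derivative_transform_within_open[OF gnu line_open_u[OF oD, of "snd p"]])
      using p by (auto dest: nuD)
    then have c2: "deriv g (\<nu> p) * pu \<nu> p * GG x p = (nu1 x p - nu2 x p) * A"
      using codazzi2[OF reg pp p] unfolding A_def has_real_derivative_iff_has_vector_derivative by blast
    have "((\<lambda>s. mu (s, snd p)) has_real_derivative
        2 * A / (2 * GG x p) + deriv g (\<nu> p) / (g (\<nu> p) - f (\<nu> p)) * pu \<nu> p) (at (fst p))"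
      unfolding mu_def using DERIV_add[OF l1 l2] by simp
    moreover have "2 * A / (2 * GG x p) + deriv g (\<nu> p) / (g (\<nu> p) - f (\<nu> p)) * pu \<nu> p = 0"
    proof -
      have fg': "g (\<nu> p) - f (\<nu> p) = - (nu1 x p - nu2 x p)" using nuD[OF p] by simp
      have n: "nu1 x p - nu2 x p > 0" using sr[OF p] .
      have "deriv g (\<nu> p) * pu \<nu> p = (nu1 x p - nu2 x p) * A / GG x p" using c2 G by (simp add: field_simps)
      then show ?thesis unfolding fg' using G n by (simp add: field_simps)
    qed
    ultimately show ?thesis by simp
  qed
  show ?thesis
  proof
    assume "geometric_principal_params D x \<nu> \<Phi> \<Psi>"
    then obtain c1 c2 where c1: "\<forall>p\<in>D. lam p = c1" and c2: "\<forall>p\<in>D. mu p = c2"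
      unfolding geometric_principal_params_def lam_def mu_def by blast
    have "\<forall>p\<in>D. S p = exp (c1 + c2 - K)"
    proof
      fix p assume p: "p \<in> D"
      have "ln (S p) = c1 + c2 - K" using sum[OF p] c1 c2 p by simp
      then show "S p = exp (c1 + c2 - K)" using Spos[OF p] by (metis exp_ln)
    qed
    then show "\<exists>c. \<forall>p\<in>D. sqrt (EE x p * GG x p) * (nu1 x p - nu2 x p) = c"
      unfolding S_def by blast
  next
    assume "\<exists>c. \<forall>p\<in>D. sqrt (EE x p * GG x p) * (nu1 x p - nu2 x p) = c"
    then obtain c where c: "\<And>p. p\<in>D \<Longrightarrow> S p = c" unfolding S_def by blast
    define C where "C = ln c + K"
    have sumC: "\<And>p. p \<in> D \<Longrightarrow> lam p + mu p = C" using sum c unfolding C_def by simp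
    have lam_u: "((\<lambda>s. lam (s, snd p)) has_real_derivative 0) (at (fst p))" if p: "p \<in> D" for p
    proof -
      have "((\<lambda>s. C - mu (s, snd p)) has_real_derivative 0 - 0) (at (fst p))"
        by (intro DERIV_diff DERIV_const mu_u p)
      then have "((\<lambda>s. C - mu (s, snd p)) has_real_derivative 0) (at (fst p))" by simp
      then show ?thesis
        apply (rule has_field_derivative_transform_within_open[OF _ line_open_u[OF oD, of "snd p"]])
        using p sumC by (auto simp: algebra_simps)
    qed
    have mu_v: "((\<lambda>t. mu (fst p, t)) has_real_derivative 0) (at (snd p))" if p: "p \<in> D" for p
    proof -
      have "((\<lambda>t. C - lam (fst p, t)) has_real_derivative 0 - 0) (at (snd p))"
        by (intro DERIV_diff DERIV_const lam_v p)
      then have "((\<lambda>t. C - lam (fst p, t)) has_real_derivative 0) (at (snd p))" by simp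
      then show ?thesis
        apply (rule has_field_derivative_transform_within_open[OF _ line_open_v[OF oD, of "fst p"]])
        using p sumC by (auto simp: algebra_simps)
    qed
    have "\<exists>c. \<forall>q\<in>D. lam q = c" by (rule zero_partials_const[OF oD cD lam_u lam_v])
    moreover have "\<exists>c. \<forall>q\<in>D. mu q = c" by (rule zero_partials_const[OF oD cD mu_u mu_v])
    ultimately show "geometric_principal_params D x \<nu> \<Phi> \<Psi>"
      unfolding geometric_principal_params_def lam_def mu_def by blast
  qed
qed

end
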